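(* If $X$ is a space satisfying ${\sf S}_1(\mathcal{G}_K,\mathcal{G}_\Gamma)$ and every compact subset of $X$ is finite, then for every $\gamma$-space $Y$, the product $X\times Y$ is a $\gamma$-space.
   Context: All spaces are infinite ${\sf T}_1$ topological spaces. $\mathcal{G}_K$ is the family of all collections $\mathcal{U}$ of ${\sf G}_\delta$ subsets of $X$ with $X\notin\mathcal{U}$ such that each compact subset of $X$ is contained in some member of $\mathcal{U}$. $\mathcal{G}_\Gamma$ is the family of infinite collections $\mathcal{U}$ of ${\sf G}_\delta$ subsets of $X$ such that every infinite subcollection covers $X$. ${\sf S}_1(\mathcal{A},\mathcal{B})$: for each sequence $(A_n)$ of elements of $\mathcal{A}$ there are $B_n\in A_n$ with $\{B_n:n\in\mathbb{N}\}\in\mathcal{B}$. $\Omega$: open covers $\mathcal{U}$ of the space with the space itself not in $\mathcal{U}$ such that every finite subset lies in some member. $\Gamma$: infinite open covers $\mathcal{U}$ such that each point lies outside only finitely many members of $\mathcal{U}$. A $\gamma$-space is a space satisfying ${\sf S}_1(\Omega,\Gamma)$. *)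

theory Defs
  imports "HOL-Analysis.Analysis"
begin

text \<open>Spaces are types of class t1_space (topology = open), assumed infinite.\<close>

definition S1 :: "'a set set set \<Rightarrow> 'a set set set \<Rightarrow> bool" where
  "S1 \<A> \<B> \<longleftrightarrow> (\<forall>A :: nat \<Rightarrow> 'a set set. (\<forall>n. A n \<in> \<A>) \<longrightarrow>
      (\<exists>B :: nat \<Rightarrow> 'a set. (\<forall>n. B n \<in> A n) \<and> range B \<in> \<B>))"

definition OmegaCovers :: "'a::topological_space set set set" where
  "OmegaCovers = {\<U>. (\<forall>U\<in>\<U>. open U) \<and> \<Union>\<U> = UNIV \<and> UNIV \<notin> \<U> \<and>
      (\<forall>F. finite F \<longrightarrow> (\<exists>U\<in>\<U>. F \<subseteq> U))}"

definition GammaCovers :: "'a::topological_space set set set" where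
  "GammaCovers = {\<U>. (\<forall>U\<in>\<U>. open U) \<and> \<Union>\<U> = UNIV \<and> infinite \<U> \<and>
      (\<forall>x. finite {U\<in>\<U>. x \<notin> U})}"

definition G_K :: "'a::topological_space set set set" where
  "G_K = {\<U>. (\<forall>U\<in>\<U>. gdelta_in euclidean U) \<and> UNIV \<notin> \<U> \<and>
      (\<forall>K. compact K \<longrightarrow> (\<exists>U\<in>\<U>. K \<subseteq> U))}"

definition G_Gamma :: "'a::topological_space set set set" where
  "G_Gamma = {\<U>. (\<forall>U\<in>\<U>. gdelta_in euclidean U) \<and> infinite \<U> \<and>
      (\<forall>\<V>\<subseteq>\<U>. infinite \<V> \<longrightarrow> \<Union>\<V> = UNIV)}"

definition gamma_space :: "'a::topological_space itself \<Rightarrow> bool" where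
  "gamma_space _ \<longleftrightarrow> S1 (OmegaCovers :: 'a set set set) (GammaCovers :: 'a set set set)"

end

theory Submission
  imports Defs
begin

lemma index_lemma:
  fixes \<A> :: "'c set set set" and A :: "nat \<Rightarrow> 'c set set"
  assumes S: "S1 \<A> \<B>"
    and B: "\<And>\<U>. \<U> \<in> \<B> \<Longrightarrow> infinite \<U> \<and> (\<forall>x. finite {U\<in>\<U>. x \<notin> U})"
    and W: "\<And>(A :: nat \<Rightarrow> 'c set set) (n::nat). (\<forall>i. A i \<in> \<A>) \<Longrightarrow> {\<Inter>i\<in>{..n}. c i | c. \<forall>i\<le>n. c i \<in> A i} \<in> \<A>"
    and A: "\<forall>n. A n \<in> \<A>"
  shows "\<exists>B. (\<forall>n. B n \<in> A n) \<and> (\<forall>x. finite {n. x \<notin> B n})"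
proof -
  define A' where "A' n = {\<Inter>i\<in>{..n}. c i | c. \<forall>i\<le>n. c i \<in> A i}" for n
  have "\<forall>n. A' n \<in> \<A>" unfolding A'_def using W[OF A] by simp
  then obtain B' where B'in: "\<And>n. B' n \<in> A' n" and rng: "range B' \<in> \<B>"
    using S unfolding S1_def by blast
  have "\<forall>n. \<exists>c. B' n = (\<Inter>i\<in>{..n}. c i) \<and> (\<forall>i\<le>n. c i \<in> A i)"
    using B'in unfolding A'_def by blast
  then obtain c where c: "\<forall>n. B' n = (\<Inter>i\<in>{..n}. c n i) \<and> (\<forall>i\<le>n. c n i \<in> A i)"
    by (rule choice[THEN exE])
  have c1: "B' n = (\<Inter>i\<in>{..n}. c n i)" for n using c by blast
  have c2: "i \<le> n \<Longrightarrow> c n i \<in> A i" for n i using c by blast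
  define I where "I = {n. \<forall>m<n. B' m \<noteq> B' n}"
  have img: "B' ` I = range B'"
  proof
    show "B' ` I \<subseteq> range B'" by auto
    show "range B' \<subseteq> B' ` I"
    proof
      fix U assume "U \<in> range B'"
      then obtain n where n: "U = B' n" by auto
      define m where "m = (LEAST m. B' m = U)"
      have Bm: "B' m = U" unfolding m_def using LeastI[of "\<lambda>m. B' m = U" n] n by simp
      have "m \<in> I" unfolding I_def
      proof (clarify)
        fix k assume "k < m" "B' k = B' m"
        thus False using not_less_Least[of k "\<lambda>m. B' m = U"] Bm m_def by auto
      qed
      thus "U \<in> B' ` I" using Bm by blast
    qed
  qed
  have infI: "infinite I"
  proof
    assume "finite I"
    hence "finite (range B')" using img by (metis finite_imageI)
    thus False using B[OF rng] by simp
  qed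
  have inj: "inj_on B' I"
  proof (rule inj_onI)
    fix m n assume "m \<in> I" "n \<in> I" "B' m = B' n"
    show "m = n"
    proof (rule ccontr)
      assume "m \<noteq> n"
      hence "m < n \<or> n < m" by arith
      thus False using \<open>m \<in> I\<close> \<open>n \<in> I\<close> \<open>B' m = B' n\<close> unfolding I_def by auto
    qed
  qed
  have finT: "finite {n\<in>I. x \<notin> B' n}" for x
  proof -
    have "B' ` {n\<in>I. x \<notin> B' n} \<subseteq> {U\<in>range B'. x \<notin> U}" by auto
    moreover have "finite {U\<in>range B'. x \<notin> U}" using B[OF rng] by blast
    ultimately have "finite (B' ` {n\<in>I. x \<notin> B' n})" by (rule finite_subset)
    moreover have "inj_on B' {n\<in>I. x \<notin> B' n}" using inj by (rule inj_on_subset) auto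
    ultimately show ?thesis using finite_imageD by blast
  qed
  have ex: "\<exists>n. n\<in>I \<and> k \<le> n" for k using infI
    unfolding infinite_nat_iff_unbounded_le by blast
  define j where "j k = (LEAST n. n \<in> I \<and> k \<le> n)" for k
  have j: "j k \<in> I \<and> k \<le> j k" for k unfolding j_def using ex[of k]
    by (rule LeastI_ex)
  define Bf where "Bf k = c (j k) k" for k
  show ?thesis
  proof (intro exI[of _ Bf] conjI allI)
    fix n show "Bf n \<in> A n" using c2 j unfolding Bf_def by blast
  next
    fix x
    let ?T = "{n\<in>I. x \<notin> B' n}"
    have "{k. x \<notin> Bf k} \<subseteq> (\<Union>n\<in>?T. {..n})"
    proof
      fix k assume "k \<in> {k. x \<notin> Bf k}"
      hence "x \<notin> B' (j k)" unfolding Bf_def c1 using j by auto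
      thus "k \<in> (\<Union>n\<in>?T. {..n})" using j by auto
    qed
    moreover have "finite (\<Union>n\<in>?T. {..n})" using finT by blast
    ultimately show "finite {k. x \<notin> Bf k}" using finite_subset by blast
  qed
qed

lemma omega_wedge:
  fixes A :: "nat \<Rightarrow> 'c::topological_space set set"
  assumes "\<forall>i. A i \<in> OmegaCovers"
  shows "{\<Inter>i\<in>{..n}. c i | c. \<forall>i\<le>n. c i \<in> A i} \<in> OmegaCovers"
proof -
  let ?W = "{\<Inter>i\<in>{..n}. c i | c. \<forall>i\<le>n. c i \<in> A i}"
  have fin: "\<exists>U\<in>?W. F \<subseteq> U" if "finite F" for F
  proof -
    have "\<forall>i. \<exists>U. U \<in> A i \<and> F \<subseteq> U" using assms that unfolding OmegaCovers_def by blast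
    then obtain c where c: "\<forall>i. c i \<in> A i \<and> F \<subseteq> c i" by (rule choice[THEN exE])
    have "(\<Inter>i\<in>{..n}. c i) \<in> ?W" using c by blast
    moreover have "F \<subseteq> (\<Inter>i\<in>{..n}. c i)" using c by blast
    ultimately show ?thesis by blast
  qed
  have op: "\<forall>U\<in>?W. open U"
  proof clarify
    fix c assume "\<forall>i\<le>n. c i \<in> A i"
    then show "open (\<Inter>(c ` {..n}))"
      by (intro open_INT) (use assms in \<open>auto simp: OmegaCovers_def\<close>)
  qed
  have nu: "UNIV \<notin> ?W"
  proof
    assume "UNIV \<in> ?W"
    then obtain c where "UNIV = (\<Inter>i\<in>{..n}. c i)" "\<forall>i\<le>n. c i \<in> A i" by blast
    hence "c 0 = UNIV" "c 0 \<in> A 0" by auto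
    thus False using assms unfolding OmegaCovers_def by auto
  qed
  have "\<Union>?W = UNIV"
  proof -
    have "x \<in> \<Union>?W" for x using fin[of "{x}"] by auto
    thus ?thesis by auto
  qed
  thus ?thesis using fin op nu unfolding OmegaCovers_def by (simp only: mem_Collect_eq) blast
qed

lemma gk_wedge:
  fixes A :: "nat \<Rightarrow> 'c::topological_space set set"
  assumes "\<forall>i. A i \<in> G_K"
  shows "{\<Inter>i\<in>{..n}. c i | c. \<forall>i\<le>n. c i \<in> A i} \<in> G_K"
proof -
  let ?W = "{\<Inter>i\<in>{..n}. c i | c. \<forall>i\<le>n. c i \<in> A i}"
  have fin: "\<exists>U\<in>?W. F \<subseteq> U" if "compact F" for F
  proof -
    have "\<forall>i. \<exists>U. U \<in> A i \<and> F \<subseteq> U" using assms that unfolding G_K_def by blast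
    then obtain c where c: "\<forall>i. c i \<in> A i \<and> F \<subseteq> c i" by (rule choice[THEN exE])
    have "(\<Inter>i\<in>{..n}. c i) \<in> ?W" using c by blast
    moreover have "F \<subseteq> (\<Inter>i\<in>{..n}. c i)" using c by blast
    ultimately show ?thesis by blast
  qed
  have op: "\<forall>U\<in>?W. gdelta_in euclidean U"
  proof clarify
    fix c assume c: "\<forall>i\<le>n. c i \<in> A i"
    show "gdelta_in euclidean (\<Inter>(c ` {..n}))"
      by (rule gdelta_in_Inter) (use assms c in \<open>auto simp: G_K_def\<close>)
  qed
  have nu: "UNIV \<notin> ?W"
  proof
    assume "UNIV \<in> ?W"
    then obtain c where "UNIV = (\<Inter>i\<in>{..n}. c i)" "\<forall>i\<le>n. c i \<in> A i" by blast
    hence "c 0 = UNIV" "c 0 \<in> A 0" by auto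
    thus False using assms unfolding G_K_def by auto
  qed
  show ?thesis using fin op nu unfolding G_K_def by (simp only: mem_Collect_eq) blast
qed

lemma gamma_B: "\<U> \<in> GammaCovers \<Longrightarrow> infinite \<U> \<and> (\<forall>x. finite {U\<in>\<U>. x \<notin> U})"
  by (simp add: GammaCovers_def)

lemma ggamma_B: "\<U> \<in> G_Gamma \<Longrightarrow> infinite \<U> \<and> (\<forall>x. finite {U\<in>\<U>. x \<notin> U})"
proof -
  assume a: "\<U> \<in> G_Gamma"
  have "finite {U\<in>\<U>. x \<notin> U}" for x
  proof (rule ccontr)
    assume "infinite {U\<in>\<U>. x \<notin> U}"
    moreover have "{U\<in>\<U>. x \<notin> U} \<subseteq> \<U>" by blast
    ultimately have "\<Union>{U\<in>\<U>. x \<notin> U} = UNIV" using a unfolding G_Gamma_def by blast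
    thus False by auto
  qed
  thus ?thesis using a unfolding G_Gamma_def by blast
qed

lemma finite_tube:
  fixes W :: "('a::topological_space \<times> 'b::topological_space) set"
  assumes "open W" "finite F" "finite S" "F \<times> S \<subseteq> W"
  shows "\<exists>U V. open U \<and> open V \<and> F \<subseteq> U \<and> S \<subseteq> V \<and> U \<times> V \<subseteq> W"
proof -
  have "\<forall>p. \<exists>AB. p \<in> F\<times>S \<longrightarrow> open (fst AB) \<and> open (snd AB) \<and> fst p \<in> fst AB \<and> snd p \<in> snd AB \<and> fst AB \<times> snd AB \<subseteq> W"
  proof
    fix p 
    show "\<exists>AB. p \<in> F\<times>S \<longrightarrow> open (fst AB) \<and> open (snd AB) \<and> fst p \<in> fst AB \<and> snd p \<in> snd AB \<and> fst AB \<times> snd AB \<subseteq> W"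
    proof (cases "p \<in> F \<times> S")
      case True
      hence "p \<in> W" using assms by auto
      then obtain A B where "open A" "open B" "p \<in> A \<times> B" "A \<times> B \<subseteq> W"
        using open_prod_elim[OF assms(1)] by blast
      thus ?thesis by (intro exI[of _ "(A,B)"]) (cases p, auto)
    qed auto
  qed
  then obtain AB where AB0: "\<forall>p. p \<in> F\<times>S \<longrightarrow> open (fst (AB p)) \<and> open (snd (AB p)) \<and> fst p \<in> fst (AB p) \<and> snd p \<in> snd (AB p) \<and> fst (AB p) \<times> snd (AB p) \<subseteq> W"
    by (rule choice[THEN exE])
  define A where "A p = fst (AB p)" for p
  define B where "B p = snd (AB p)" for p
  have AB: "open (A p) \<and> open (B p) \<and> fst p \<in> A p \<and> snd p \<in> B p \<and> A p \<times> B p \<subseteq> W" if "p \<in> F\<times>S" for p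
    using AB0 that unfolding A_def B_def by blast
  define U where "U = (\<Union>a\<in>F. \<Inter>b\<in>S. A (a,b))"
  define V where "V = (\<Inter>a\<in>F. \<Union>b\<in>S. B (a,b))"
  have "open U" unfolding U_def using AB assms by (auto intro!: open_INT open_UN)
  moreover have "open V" unfolding V_def using AB assms by (auto intro!: open_INT open_UN)
  moreover have "F \<subseteq> U" unfolding U_def using AB by fastforce
  moreover have "S \<subseteq> V" unfolding V_def using AB by fastforce
  moreover have "U \<times> V \<subseteq> W"
  proof clarify
    fix u v assume "u \<in> U" "v \<in> V"
    then obtain a where a: "a \<in> F" "\<forall>b\<in>S. u \<in> A (a,b)" unfolding U_def by auto
    then obtain b where b: "b \<in> S" "v \<in> B (a,b)" using \<open>v \<in> V\<close> unfolding V_def by auto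
    have "(u,v) \<in> A (a,b) \<times> B (a,b)" using a b by auto
    thus "(u,v) \<in> W" using AB[of "(a,b)"] a b by auto
  qed
  ultimately show ?thesis by blast
qed

theorem theorem4p18:
  assumes "infinite (UNIV :: 'a::t1_space set)"
    and "infinite (UNIV :: 'b::t1_space set)"
    and "S1 (G_K :: 'a set set set) (G_Gamma :: 'a set set set)"
    and "\<forall>K :: 'a set. compact K \<longrightarrow> finite K"
    and "gamma_space TYPE('b)"
  shows "gamma_space TYPE('a \<times> 'b)"
proof -
  have Ysel: "\<exists>B. (\<forall>n. B n \<in> A n) \<and> (\<forall>y. finite {n. y \<notin> B n})"
    if "\<forall>n. A n \<in> OmegaCovers" for A :: "nat \<Rightarrow> 'b set set"
    by (rule index_lemma[OF assms(5)[unfolded gamma_space_def] gamma_B omega_wedge that])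
  have Xsel: "\<exists>B. (\<forall>n. B n \<in> A n) \<and> (\<forall>y. finite {n. y \<notin> B n})"
    if "\<forall>n. A n \<in> G_K" for A :: "nat \<Rightarrow> 'a set set"
    by (rule index_lemma[OF assms(3) ggamma_B gk_wedge that])
  show ?thesis unfolding gamma_space_def S1_def
  proof (intro allI impI)
    fix \<W> :: "nat \<Rightarrow> ('a \<times> 'b) set set"
    assume Wom: "\<forall>n. \<W> n \<in> OmegaCovers"
    define \<V> where "\<V> n F = {V. open V \<and> V \<noteq> UNIV \<and> (\<exists>U W. open U \<and> F \<subseteq> U \<and> W \<in> \<W> n \<and> U \<times> V \<subseteq> W)}"
      for n and F :: "'a set"
    have Vom: "\<V> n F \<in> OmegaCovers" if "finite F" for n F
    proof -
      have fin: "\<exists>V\<in>\<V> n F. S \<subseteq> V" if "finite S" for S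
      proof -
        have "finite (F \<times> S)" using \<open>finite F\<close> \<open>finite S\<close> by simp
        then obtain W where W: "W \<in> \<W> n" "F \<times> S \<subseteq> W" using Wom unfolding OmegaCovers_def by blast
        have "open W" using W Wom unfolding OmegaCovers_def by blast
        then obtain U V where UV: "open U" "open V" "F \<subseteq> U" "S \<subseteq> V" "U \<times> V \<subseteq> W"
          using finite_tube[of W F S] \<open>finite F\<close> \<open>finite S\<close> W by blast
        obtain y0 where y0: "y0 \<notin> S" using ex_new_if_finite[OF assms(2) \<open>finite S\<close>] by blast
        have "U \<times> (V - {y0}) \<subseteq> W" using UV by blast
        moreover have "open (V - {y0})" using UV by (auto intro!: open_delete)
        ultimately have "V - {y0} \<in> \<V> n F" unfolding \<V>_def using UV W by blast
        moreover have "S \<subseteq> V - {y0}" using UV y0 by auto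
        ultimately show ?thesis by blast
      qed
      have "\<Union>(\<V> n F) = UNIV" using fin[of "{_}"] by blast
      thus ?thesis using fin unfolding OmegaCovers_def \<V>_def by auto
    qed
    have "\<forall>n F. \<exists>v::nat \<Rightarrow> 'b set. finite F \<longrightarrow> (\<forall>m. v m \<in> \<V> n F) \<and> (\<forall>y. finite {m. y \<notin> v m})"
    proof (intro allI)
      fix n F
      show "\<exists>v::nat \<Rightarrow> 'b set. finite F \<longrightarrow> (\<forall>m. v m \<in> \<V> n F) \<and> (\<forall>y. finite {m. y \<notin> v m})"
      proof (cases "finite F")
        case True
        have "\<forall>k. (\<lambda>_. \<V> n F) k \<in> OmegaCovers" using Vom[OF True] by simp
        from Ysel[OF this] show ?thesis using True by simp
      qed auto
    qed
    hence "\<forall>n. \<exists>vn :: 'a set \<Rightarrow> nat \<Rightarrow> 'b set. \<forall>F. finite F \<longrightarrow> (\<forall>m. vn F m \<in> \<V> n F) \<and> (\<forall>y. finite {m. y \<notin> vn F m})"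
      by (intro allI choice) blast
    then obtain vv :: "nat \<Rightarrow> 'a set \<Rightarrow> nat \<Rightarrow> 'b set" where vv0: "\<forall>n F. finite F \<longrightarrow> (\<forall>m. vv n F m \<in> \<V> n F) \<and> (\<forall>y. finite {m. y \<notin> vv n F m})"
      by (rule choice[THEN exE])
    have vv: "\<And>n F m. finite F \<Longrightarrow> vv n F m \<in> \<V> n F" using vv0 by blast
    have vv2: "\<And>n F y. finite F \<Longrightarrow> finite {m. y \<notin> vv n F m}" using vv0 by blast
    have "\<forall>t. \<exists>UW. finite (fst (snd t)) \<longrightarrow> open (fst UW) \<and> fst (snd t) \<subseteq> fst UW \<and> snd UW \<in> \<W> (fst t) \<and> fst UW \<times> vv (fst t) (fst (snd t)) (snd (snd t)) \<subseteq> snd UW"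
    proof
      fix t :: "nat \<times> 'a set \<times> nat"
      obtain n F m where t: "t = (n,F,m)" by (cases t) auto
      show "\<exists>UW. finite (fst (snd t)) \<longrightarrow> open (fst UW) \<and> fst (snd t) \<subseteq> fst UW \<and> snd UW \<in> \<W> (fst t) \<and> fst UW \<times> vv (fst t) (fst (snd t)) (snd (snd t)) \<subseteq> snd UW"
      proof (cases "finite F")
        case True
        then obtain U W where "open U" "F \<subseteq> U" "W \<in> \<W> n" "U \<times> vv n F m \<subseteq> W"
          using vv[OF True, of n m] unfolding \<V>_def by blast
        thus ?thesis unfolding t by (intro exI[of _ "(U,W)"]) simp
      qed (simp add: t)
    qed
    then obtain UW where UW: "\<forall>t. finite (fst (snd t)) \<longrightarrow> open (fst (UW t)) \<and> fst (snd t) \<subseteq> fst (UW t) \<and> snd (UW t) \<in> \<W> (fst t) \<and> fst (UW t) \<times> vv (fst t) (fst (snd t)) (snd (snd t)) \<subseteq> snd (UW t)"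
      by (rule choice[THEN exE])
    define uu where "uu n F m = fst (UW (n,F,m))" for n F m
    define ww where "ww n F m = snd (UW (n,F,m))" for n F m
    have uw: "\<And>n F m. finite F \<Longrightarrow> open (uu n F m) \<and> F \<subseteq> uu n F m \<and> ww n F m \<in> \<W> n \<and> uu n F m \<times> vv n F m \<subseteq> ww n F m"
    proof -
      fix n :: nat and F :: "'a set" and m :: nat assume "finite F"
      thus "open (uu n F m) \<and> F \<subseteq> uu n F m \<and> ww n F m \<in> \<W> n \<and> uu n F m \<times> vv n F m \<subseteq> ww n F m"
        using UW[rule_format, of "(n,F,m)"] unfolding uu_def ww_def by simp
    qed
    define xp where "xp F = (SOME x. x \<notin> F)" for F :: "'a set"
    have xp: "finite F \<Longrightarrow> xp F \<notin> F" for F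
      unfolding xp_def using ex_new_if_finite[OF assms(1)] by (rule someI_ex)
    define G where "G n F = (\<Inter>m. uu n F m) - {xp F}" for n F
    define \<G> where "\<G> n = {G n F | F. finite F}" for n
    have GK: "\<G> n \<in> G_K" for n
    proof -
      have gd: "gdelta_in euclidean (G n F)" if "finite F" for F
      proof -
        have "G n F = \<Inter>(insert (UNIV - {xp F}) (range (uu n F)))" unfolding G_def by auto
        moreover have "gdelta_in euclidean (\<Inter>(insert (UNIV - {xp F}) (range (uu n F))))"
          by (rule gdelta_in_Inter) (use uw[OF that] in \<open>auto intro!: open_imp_gdelta_in open_delete simp: open_openin[symmetric]\<close>)
        ultimately show ?thesis by simp
      qed
      have cK: "\<exists>U\<in>\<G> n. K \<subseteq> U" if "compact K" for K
      proof -
        have fK: "finite K" using assms(4) that by blast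
        have "K \<subseteq> G n K" unfolding G_def using uw[OF fK] xp[OF fK] by auto
        moreover have "G n K \<in> \<G> n" unfolding \<G>_def using fK by blast
        ultimately show ?thesis by blast
      qed
      have nU: "UNIV \<notin> \<G> n" unfolding \<G>_def G_def by auto
      have gdA: "\<forall>U\<in>\<G> n. gdelta_in euclidean U" unfolding \<G>_def using gd by blast
      show ?thesis unfolding G_K_def using cK nU gdA by (simp only: mem_Collect_eq) blast
    qed
    obtain BX where BX: "\<And>n. BX n \<in> \<G> n" and BX2: "\<And>x. finite {n. x \<notin> BX n}"
      using Xsel[of \<G>] GK by blast
    have "\<forall>n. \<exists>F. finite F \<and> BX n = G n F" using BX unfolding \<G>_def by blast
    then obtain FF where FF0: "\<forall>n. finite (FF n) \<and> BX n = G n (FF n)" by (rule choice[THEN exE])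
    have FF: "\<And>n. finite (FF n)" "\<And>n. BX n = G n (FF n)" using FF0 by auto
    define \<V>' where "\<V>' n = range (vv n (FF n))" for n
    have V'om: "\<V>' n \<in> OmegaCovers" for n
    proof -
      have fin: "\<exists>V\<in>\<V>' n. S \<subseteq> V" if "finite S" for S
      proof -
        have "finite (\<Union>y\<in>S. {m. y \<notin> vv n (FF n) m})" using that vv2[OF FF(1)] by auto
        then obtain m where "m \<notin> (\<Union>y\<in>S. {m. y \<notin> vv n (FF n) m})"
          using ex_new_if_finite[OF infinite_UNIV_nat] by blast
        hence "S \<subseteq> vv n (FF n) m" by auto
        thus ?thesis unfolding \<V>'_def by blast
      qed
      have "x \<in> \<Union>(\<V>' n)" for x using fin[of "{x}"] by auto
      hence "\<Union>(\<V>' n) = UNIV" by auto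
      moreover have "\<forall>V\<in>\<V>' n. open V \<and> V \<noteq> UNIV" using vv[OF FF(1)] unfolding \<V>'_def \<V>_def by auto
      ultimately show ?thesis using fin unfolding OmegaCovers_def by auto
    qed
    obtain BY where BY: "\<And>n. BY n \<in> \<V>' n" and BY2: "\<And>y. finite {n. y \<notin> BY n}"
      using Ysel[of \<V>'] V'om by blast
    have "\<forall>n. \<exists>m. BY n = vv n (FF n) m" using BY unfolding \<V>'_def by blast
    then obtain mm where mm0: "\<forall>n. BY n = vv n (FF n) (mm n)" by (rule choice[THEN exE])
    have mm: "\<And>n. BY n = vv n (FF n) (mm n)" using mm0 by blast
    define Wf where "Wf n = ww n (FF n) (mm n)" for n
    have Win: "Wf n \<in> \<W> n" for n unfolding Wf_def using uw[OF FF(1)] by blast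
    have key: "p \<in> Wf n" if "fst p \<in> BX n" "snd p \<in> BY n" for p n
    proof -
      have "fst p \<in> uu n (FF n) (mm n)" using that FF unfolding G_def by auto
      hence "p \<in> uu n (FF n) (mm n) \<times> vv n (FF n) (mm n)" using that mm by (cases p) auto
      thus ?thesis unfolding Wf_def using uw[OF FF(1)] by blast
    qed
    have finW: "finite {n. p \<notin> Wf n}" for p
    proof -
      have "{n. p \<notin> Wf n} \<subseteq> {n. fst p \<notin> BX n} \<union> {n. snd p \<notin> BY n}" using key by blast
      thus ?thesis using BX2 BY2 by (meson finite_Un finite_subset)
    qed
    have notU: "Wf n \<noteq> UNIV" for n using Win[of n] Wom unfolding OmegaCovers_def by auto
    have opW: "open (Wf n)" for n using Win Wom unfolding OmegaCovers_def by blast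
    have infW: "infinite (range Wf)"
    proof
      assume "finite (range Wf)"
      then obtain U where U: "U \<in> range Wf" "infinite (Wf -` {U})"
        using inf_img_fin_dom[of Wf UNIV] by auto
      then obtain p where "p \<notin> U" using notU by blast
      hence "Wf -` {U} \<subseteq> {n. p \<notin> Wf n}" by auto
      thus False using U finW finite_subset by blast
    qed
    have "\<Union>(range Wf) = UNIV"
    proof -
      have "\<exists>n. p \<in> Wf n" for p
      proof (rule ccontr)
        assume "\<nexists>n. p \<in> Wf n"
        hence "{n. p \<notin> Wf n} = UNIV" by auto
        thus False using finW[of p] by simp
      qed
      thus ?thesis by blast
    qed
    moreover have "finite {U\<in>range Wf. p \<notin> U}" for p
    proof -
      have "{U\<in>range Wf. p \<notin> U} = Wf ` {n. p \<notin> Wf n}" by auto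
      thus ?thesis using finW by simp
    qed
    ultimately have "range Wf \<in> GammaCovers" using opW infW unfolding GammaCovers_def by blast
    thus "\<exists>B. (\<forall>n. B n \<in> \<W> n) \<and> range B \<in> GammaCovers" using Win by blast
  qed
qed



end
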